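(* Let $S,B\subseteq\{-1,1,*\}^X$ be binary hypothesis classes. For any $\varepsilon,\delta\ge0$ and $n\in\mathbb{Z}_{\ge0}$, every learner that solves comparative learning $\mathsf{CompL}_n(S,B,\varepsilon,\delta)$ also solves realizable learning $\mathsf{ReaL}_n(\mathbf{A}_{S,B},\varepsilon,\delta)$; i.e. $\mathsf{CompL}_n(S,B,\varepsilon,\delta)\subseteq\mathsf{ReaL}_n(\mathbf{A}_{S,B},\varepsilon,\delta)$.
   Context: $X$ is a non-empty set; hypotheses are functions $X\to\{-1,1,*\}$; distributions are discrete. For $s,b:X\to\{-1,1,*\}$, the agreement hypothesis $\mathbf{a}_{s,b}$ is $\mathbf{a}_{s,b}(x)=-1$ if $s(x)=b(x)=-1$, $=1$ if $s(x)=b(x)=1$, and $=*$ otherwise; $\mathbf{A}_{S,B}=\{\mathbf{a}_{s,b}:s\in S,b\in B\}$. A learner takes $n$ data points in $X\times\{-1,1\}$ and outputs $f:X\to\{-1,1\}$ (possibly randomized). It belongs to $\mathsf{ReaL}_n(H,\varepsilon,\delta)$ if for every distribution $\mu$ on $X\times\{-1,1\}$ with $\Pr_\mu[h(x)=y]=1$ for some $h\in H$, given $n$ i.i.d. samples from $\mu$, with probability $\ge1-\delta$ it outputs $f$ with $\Pr_\mu[f(x)\neq y]\le\varepsilon$. It belongs to $\mathsf{CompL}_n(S,B,\varepsilon,\delta)$ if for every distribution $\mu$ with $\Pr_\mu[s(x)=y]=1$ for some $s\in S$, with probability $\ge1-\delta$ it outputs $f$ with $\Pr_\mu[f(x)\ne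 y]\le\inf_{b\in B}\Pr_\mu[b(x)\ne y]+\varepsilon$ ($b(x)=*$ counts as an error). *)

theory Defs
  imports "HOL-Probability.Probability"
begin

text \<open>Binary labels {-1,1}; a (partial) hypothesis maps X to {-1,1,*},
  encoded as lab option with None standing for *.\<close>
datatype lab = Neg | Pos

type_synonym 'x hyp = "'x \<Rightarrow> lab option"

type_synonym 'x learner = "('x \<times> lab) list \<Rightarrow> ('x \<Rightarrow> lab) pmf"

definition agree :: "'x hyp \<Rightarrow> 'x hyp \<Rightarrow> 'x hyp" where
  "agree s b = (\<lambda>x. if s x = Some Neg \<and> b x = Some Neg then Some Neg
                    else if s x = Some Pos \<and> b x = Some Pos then Some Pos else None)"

definition agreeClass :: "'x hyp set \<Rightarrow> 'x hyp set \<Rightarrow> 'x hyp set" where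
  "agreeClass S B = {agree s b | s b. s \<in> S \<and> b \<in> B}"

definition err :: "('x \<times> lab) pmf \<Rightarrow> ('x \<Rightarrow> lab) \<Rightarrow> real" where
  "err \<mu> f = measure_pmf.prob \<mu> {(x, y). f x \<noteq> y}"

definition herr :: "('x \<times> lab) pmf \<Rightarrow> 'x hyp \<Rightarrow> real" where
  "herr \<mu> h = measure_pmf.prob \<mu> {(x, y). h x \<noteq> Some y}"

definition realizable :: "'x hyp set \<Rightarrow> ('x \<times> lab) pmf \<Rightarrow> bool" where
  "realizable H \<mu> \<longleftrightarrow> (\<exists>h\<in>H. measure_pmf.prob \<mu> {(x, y). h x = Some y} = 1)"

definition ReaL :: "nat \<Rightarrow> 'x hyp set \<Rightarrow> real \<Rightarrow> real \<Rightarrow> 'x learner set" where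
  "ReaL n H \<epsilon> \<delta> = {L. \<forall>\<mu>. realizable H \<mu> \<longrightarrow>
      measure_pmf.prob (bind_pmf (replicate_pmf n \<mu>) L) {f. err \<mu> f \<le> \<epsilon>} \<ge> 1 - \<delta>}"

definition CompL :: "nat \<Rightarrow> 'x hyp set \<Rightarrow> 'x hyp set \<Rightarrow> real \<Rightarrow> real \<Rightarrow> 'x learner set" where
  "CompL n S B \<epsilon> \<delta> = {L. \<forall>\<mu>. realizable S \<mu> \<longrightarrow>
      measure_pmf.prob (bind_pmf (replicate_pmf n \<mu>) L)
        {f. err \<mu> f \<le> (INF b\<in>B. herr \<mu> b) + \<epsilon>} \<ge> 1 - \<delta>}"

end

theory Submission
  imports Defs
begin

lemma prob_one_mono:
  fixes \<mu> :: "'a pmf"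
  assumes "measure_pmf.prob \<mu> A = 1" "A \<subseteq> C"
  shows "measure_pmf.prob \<mu> C = 1"
proof -
  have "measure_pmf.prob \<mu> A \<le> measure_pmf.prob \<mu> C"
    using assms(2) by (intro measure_pmf.finite_measure_mono) auto
  moreover have "measure_pmf.prob \<mu> C \<le> 1" by simp
  ultimately show ?thesis using assms(1) by linarith
qed

lemma herr_zero:
  assumes "measure_pmf.prob \<mu> {(x, y). b x = Some y} = 1"
  shows "herr \<mu> b = 0"
proof -
  have "{(x, y). b x \<noteq> Some y} = UNIV - {(x, y). b x = Some y}" by auto
  hence "herr \<mu> b = 1 - measure_pmf.prob \<mu> {(x, y). b x = Some y}"
    unfolding herr_def using measure_pmf.prob_compl[of "{(x, y). b x = Some y}" \<mu>]
    by simp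
  thus ?thesis using assms by simp
qed

theorem lemma3p7:
  fixes S B :: "'x hyp set" and \<epsilon> \<delta> :: real and n :: nat
  assumes "\<epsilon> \<ge> 0" and "\<delta> \<ge> 0"
  shows "CompL n S B \<epsilon> \<delta> \<subseteq> ReaL n (agreeClass S B) \<epsilon> \<delta>"
proof
  fix L assume L: "L \<in> CompL n S B \<epsilon> \<delta>"
  show "L \<in> ReaL n (agreeClass S B) \<epsilon> \<delta>"
    unfolding ReaL_def
  proof (intro CollectI allI impI)
    fix \<mu> assume "realizable (agreeClass S B) \<mu>"
    then obtain s b where sb: "s \<in> S" "b \<in> B"
      and p: "measure_pmf.prob \<mu> {(x, y). agree s b x = Some y} = 1"
      unfolding realizable_def agreeClass_def by blast
    have ps: "measure_pmf.prob \<mu> {(x, y). s x = Some y} = 1"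
      by (rule prob_one_mono[OF p]) (auto simp: agree_def split: if_splits)
    have pb: "measure_pmf.prob \<mu> {(x, y). b x = Some y} = 1"
      by (rule prob_one_mono[OF p]) (auto simp: agree_def split: if_splits)
    have rS: "realizable S \<mu>" unfolding realizable_def using sb ps by blast
    have hb: "herr \<mu> b = 0" by (rule herr_zero[OF pb])
    have nonneg: "\<And>c. herr \<mu> c \<ge> 0" unfolding herr_def by simp
    have le: "(INF c\<in>B. herr \<mu> c) \<le> 0"
      using cINF_lower[of "herr \<mu>" B b] sb hb nonneg
      by (metis bdd_belowI2)
    have ge: "(INF c\<in>B. herr \<mu> c) \<ge> 0"
      using sb nonneg by (intro cINF_greatest) auto
    have "(INF c\<in>B. herr \<mu> c) = 0" using le ge by linarith
    thus "measure_pmf.prob (bind_pmf (replicate_pmf n \<mu>) L) {f. err \<mu> f \<le> \<epsilon>} \<ge> 1 - \<delta>"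
      using L rS unfolding CompL_def by auto
  qed
qed

end
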